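(* Let Assumptions 1 and 2 hold. For every $\eta>0$, $T\ge1$ and payoff vectors $u_1,\dots,u_T$ with $\|u_t\|_\infty\le u_{\max}$, the regret of FTRL with regularizer $\mathcal R$ satisfies $$R^T_{FTRL}\le\eta\,\varphi_1(0)+\frac{L}{2\eta}T u_{\max}^2,$$ where $\varphi_1(0)=\mathbb{E}[\max_i\epsilon_i]$; and if $\varphi_1(0)>0$ and $\eta=\sqrt{\frac{LTu_{\max}^2}{2\varphi_1(0)}}$, then $R^T_{FTRL}\le u_{\max}\sqrt{2\varphi_1(0)LT}$.
   Context: Let $N\ge 2$, $A=\{1,\dots,N\}$, and $\Delta_N=\{x\in\mathbb{R}^N: x_i\ge 0,\ \sum_i x_i=1\}$. Let $\epsilon=(\epsilon_1,\dots,\epsilon_N)$ be a random vector satisfying Assumption 1: each $\epsilon_i$ is integrable with $\mathbb{E}[\epsilon_i]=0$, and the law of $\epsilon$ is absolutely continuous with respect to Lebesgue measure on $\mathbb{R}^N$ with support all of $\mathbb{R}^N$. For $\eta>0$ the social surplus function is $\varphi_\eta(\theta)=\mathbb{E}[\max_{j\in A}(\theta_j+\eta\epsilon_j)]$, $\theta\in\mathbb{R}^N$; thus $\varphi_\eta(\theta)=\eta\varphi_1(\theta/\eta)$. $\varphi_\eta$ is convex and differentiable with $\nabla\varphi_\eta(\theta)\in\Delta_N$. Assumption 2: $\varphi_1$ is twice continuously differentiable and there is a constant $L>0$ with $2\,\mathrm{tr}(\nabla^2\varphi_1(\theta))\le L$ for all $\theta\in\mathbb{R}^N$. Set $\theta_0=0$,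 $\theta_t=\sum_{s=1}^tu_s$. Regularizer: $\mathcal R(x)=\sup_{\theta\in\mathbb{R}^N}\{\langle\theta,x\rangle-\varphi_\eta(\theta)\}$ for $x\in\Delta_N$. FTRL: $x_1=\arg\max_{x\in\Delta_N}\{-\mathcal R(x)\}$, $x_{t+1}=\arg\max_{x\in\Delta_N}\{\langle\theta_t,x\rangle-\mathcal R(x)\}$. The regret of $x_1,\dots,x_T$ is $R^T=\max_{x\in\Delta_N}\langle\theta_T,x\rangle-\sum_{t=1}^T\langle u_t,x_t\rangle$. *)

theory Defs
  imports "HOL-Probability.Probability"
begin

definition prob_simplex :: "(real ^ 'n::finite) set" where
  "prob_simplex = {x. (\<forall>i. 0 \<le> x $ i) \<and> (\<Sum>i\<in>UNIV. x $ i) = 1}"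

definition phi :: "(real ^ 'n::finite) measure \<Rightarrow> real \<Rightarrow> real ^ 'n \<Rightarrow> real" where
  "phi P \<eta> \<theta> = (\<integral>e. Max (range (\<lambda>j. \<theta> $ j + \<eta> * e $ j)) \<partial>P)"

text \<open>Regularizer: convex conjugate of phi (real valued on the simplex).\<close>
definition reg :: "(real ^ 'n::finite) measure \<Rightarrow> real \<Rightarrow> real ^ 'n \<Rightarrow> real" where
  "reg P \<eta> x = (SUP \<theta>\<in>UNIV. \<theta> \<bullet> x - phi P \<eta> \<theta>)"

definition cumul :: "(nat \<Rightarrow> real ^ 'n::finite) \<Rightarrow> nat \<Rightarrow> real ^ 'n" where
  "cumul u t = (\<Sum>s\<in>{1..t}. u s)"

definition is_ftrl ::
  "(real ^ 'n::finite) measure \<Rightarrow> real \<Rightarrow> (nat \<Rightarrow> real ^ 'n) \<Rightarrow> nat \<Rightarrow> (nat \<Rightarrow> real ^ 'n) \<Rightarrow> bool" where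
  "is_ftrl P \<eta> u T x \<longleftrightarrow>
     (\<forall>t<T. x (t + 1) \<in> prob_simplex \<and>
        (\<forall>y\<in>prob_simplex. cumul u t \<bullet> y - reg P \<eta> y \<le> cumul u t \<bullet> x (t + 1) - reg P \<eta> (x (t + 1))))"

definition regret :: "(nat \<Rightarrow> real ^ 'n::finite) \<Rightarrow> nat \<Rightarrow> (nat \<Rightarrow> real ^ 'n) \<Rightarrow> real" where
  "regret u T x = (SUP y\<in>prob_simplex. cumul u T \<bullet> y) - (\<Sum>t\<in>{1..T}. u t \<bullet> x t)"

end

theory Submission
  imports Defs
begin

lemma Max_range_ge: "(f::'n::finite \<Rightarrow> real) j \<le> Max (range f)"
  by (rule Max_ge) auto

lemma Max_range_le_iff: "Max (range (f::'n::finite \<Rightarrow> real)) \<le> c \<longleftrightarrow> (\<forall>j. f j \<le> c)"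
  by (subst Max_le_iff) auto

lemma Max_range_in: "\<exists>j. Max (range (f::'n::finite \<Rightarrow> real)) = f j"
proof -
  have "Max (range f) \<in> range f" by (rule Max_in) auto
  then show ?thesis by (metis rangeE)
qed

lemma Max_range_abs: "\<bar>Max (range (f::'n::finite \<Rightarrow> real))\<bar> \<le> (\<Sum>j\<in>UNIV. \<bar>f j\<bar>)"
proof -
  obtain j where "Max (range f) = f j" using Max_range_in by blast
  moreover have "\<bar>f j\<bar> \<le> (\<Sum>j\<in>UNIV. \<bar>f j\<bar>)" by (rule member_le_sum) auto
  ultimately show ?thesis by simp
qed

lemma Max_range_scale:
  assumes "(c::real) > 0"
  shows "Max (range (\<lambda>j::'n::finite. c * f j)) = c * Max (range f)"
proof -
  have "mono ((*) c)" using assms by (auto simp: mono_def)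
  then have "c * Max (range f) = Max ((*) c ` range f)"
    by (rule mono_Max_commute) auto
  then show ?thesis by (simp add: image_image)
qed

locale noise =
  fixes P :: "(real ^ 'n::finite) measure"
  assumes prob: "prob_space P" and sets_P: "sets P = sets borel"
    and integ: "\<forall>i. integrable P (\<lambda>e. e $ i)"
    and mean0: "\<forall>i. (\<integral>e. e $ i \<partial>P) = 0"
begin

interpretation p: prob_space P by (rule prob)

lemma meas_comp: "(\<lambda>e. e $ i) \<in> borel_measurable P"
  using integ by auto

lemma integ_Mx: "integrable P (\<lambda>e. Max (range (\<lambda>j. \<theta> $ j + e $ j)))"
proof (rule Bochner_Integration.integrable_bound)
  show "integrable P (\<lambda>e. \<Sum>j\<in>UNIV. \<bar>\<theta> $ j\<bar> + \<bar>e $ j\<bar>)"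
    using integ by (intro Bochner_Integration.integrable_sum Bochner_Integration.integrable_add) auto
  show "(\<lambda>e. Max (range (\<lambda>j. \<theta> $ j + e $ j))) \<in> borel_measurable P"
    using meas_comp by (intro borel_measurable_Max) auto
  show "AE e in P. norm (Max (range (\<lambda>j. \<theta> $ j + e $ j))) \<le> norm (\<Sum>j\<in>UNIV. \<bar>\<theta> $ j\<bar> + \<bar>e $ j\<bar>)"
  proof (intro AE_I2)
    fix e :: "real^'n"
    have "\<bar>Max (range (\<lambda>j. \<theta> $ j + e $ j))\<bar> \<le> (\<Sum>j\<in>UNIV. \<bar>\<theta> $ j + e $ j\<bar>)" by (rule Max_range_abs)
    also have "\<dots> \<le> (\<Sum>j\<in>UNIV. \<bar>\<theta> $ j\<bar> + \<bar>e $ j\<bar>)" by (intro sum_mono) auto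
    also have "\<dots> \<le> \<bar>\<Sum>j\<in>UNIV. \<bar>\<theta> $ j\<bar> + \<bar>e $ j\<bar>\<bar>" by simp
    finally show "norm (Max (range (\<lambda>j. \<theta> $ j + e $ j))) \<le> norm (\<Sum>j\<in>UNIV. \<bar>\<theta> $ j\<bar> + \<bar>e $ j\<bar>)" by simp
  qed
qed

abbreviation "psi \<equiv> phi P 1"

lemma psi_def: "psi \<theta> = (\<integral>e. Max (range (\<lambda>j. \<theta> $ j + e $ j)) \<partial>P)"
  by (simp add: phi_def)

lemma phi_scale:
  assumes "\<eta> > 0"
  shows "phi P \<eta> \<theta> = \<eta> * psi ((1/\<eta>) *\<^sub>R \<theta>)"
proof -
  have "\<And>e. Max (range (\<lambda>j. \<theta> $ j + \<eta> * e $ j)) = \<eta> * Max (range (\<lambda>j. ((1/\<eta>) *\<^sub>R \<theta>) $ j + e $ j))"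
  proof -
    fix e :: "real^'n"
    have "Max (range (\<lambda>j. \<theta> $ j + \<eta> * e $ j)) = Max (range (\<lambda>j. \<eta> * (((1/\<eta>) *\<^sub>R \<theta>) $ j + e $ j)))"
      using assms by (simp add: algebra_simps)
    then show "?thesis e" using Max_range_scale[OF assms] by simp
  qed
  then show ?thesis unfolding phi_def by simp
qed

lemma psi_ge: "\<theta> $ k \<le> psi \<theta>"
proof -
  have "(\<integral>e. \<theta> $ k + e $ k \<partial>P) \<le> psi \<theta>" unfolding psi_def
    using integ integ_Mx by (intro integral_mono) (auto intro: Max_range_ge)
  moreover have "(\<integral>e. \<theta> $ k + e $ k \<partial>P) = \<theta> $ k"
    using integ mean0 p.prob_space by (subst Bochner_Integration.integral_add) auto
  ultimately show ?thesis by simp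
qed

lemma psi_convex:
  assumes "0 \<le> s" "s \<le> 1"
  shows "psi ((1 - s) *\<^sub>R a + s *\<^sub>R b) \<le> (1 - s) * psi a + s * psi b"
proof -
  have "psi ((1 - s) *\<^sub>R a + s *\<^sub>R b) \<le> (\<integral>e. (1 - s) * Max (range (\<lambda>j. a $ j + e $ j)) + s * Max (range (\<lambda>j. b $ j + e $ j)) \<partial>P)"
    unfolding psi_def
  proof (intro integral_mono integ_Mx Bochner_Integration.integrable_add integrable_mult_right)
    fix e :: "real^'n"
    show "Max (range (\<lambda>j. ((1 - s) *\<^sub>R a + s *\<^sub>R b) $ j + e $ j)) \<le> (1 - s) * Max (range (\<lambda>j. a $ j + e $ j)) + s * Max (range (\<lambda>j. b $ j + e $ j))"
    proof (subst Max_range_le_iff, intro allI)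
      fix j
      have "(1 - s) * (a $ j + e $ j) \<le> (1 - s) * Max (range (\<lambda>j. a $ j + e $ j))"
        using assms by (intro mult_left_mono Max_range_ge) auto
      moreover have "s * (b $ j + e $ j) \<le> s * Max (range (\<lambda>j. b $ j + e $ j))"
        using assms by (intro mult_left_mono Max_range_ge) auto
      ultimately show "((1 - s) *\<^sub>R a + s *\<^sub>R b) $ j + e $ j \<le> (1 - s) * Max (range (\<lambda>j. a $ j + e $ j)) + s * Max (range (\<lambda>j. b $ j + e $ j))"
        by (simp add: algebra_simps)
    qed
  qed
  also have "\<dots> = (1 - s) * psi a + s * psi b" unfolding psi_def
    by (subst Bochner_Integration.integral_add) (auto intro: integ_Mx)
  finally show ?thesis .
qed

definition one :: "real^'n" where "one = (\<chi> i. 1)"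

lemma psi_shift: "psi (\<theta> + c *\<^sub>R one) = psi \<theta> + c"
proof -
  have "\<And>e. Max (range (\<lambda>j. (\<theta> + c *\<^sub>R one) $ j + e $ j)) = Max (range (\<lambda>j. \<theta> $ j + e $ j)) + c"
  proof -
    fix e :: "real^'n"
    have "Max ((\<lambda>x. x + c) ` range (\<lambda>j. \<theta> $ j + e $ j)) = Max (range (\<lambda>j. \<theta> $ j + e $ j)) + c"
      by (rule mono_Max_commute[symmetric]) (auto simp: mono_def)
    then show "?thesis e" by (simp add: one_def image_image algebra_simps)
  qed
  then show ?thesis unfolding psi_def using integ_Mx p.prob_space
    by (simp add: Bochner_Integration.integral_add)
qed

lemma psi_mono:
  assumes "t \<ge> 0"
  shows "psi \<theta> \<le> psi (\<theta> + t *\<^sub>R axis i 1)"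
  unfolding psi_def
proof (intro integral_mono integ_Mx)
  fix e :: "real^'n"
  show "Max (range (\<lambda>j. \<theta> $ j + e $ j)) \<le> Max (range (\<lambda>j. (\<theta> + t *\<^sub>R axis i 1) $ j + e $ j))"
  proof (subst Max_range_le_iff, intro allI)
    fix j
    have "\<theta> $ j + e $ j \<le> (\<theta> + t *\<^sub>R axis i 1) $ j + e $ j" using assms by (auto simp: axis_def)
    also have "\<dots> \<le> Max (range (\<lambda>j. (\<theta> + t *\<^sub>R axis i 1) $ j + e $ j))" by (rule Max_range_ge)
    finally show "\<theta> $ j + e $ j \<le> \<dots>" .
  qed
qed

lemma psi_submod:
  assumes "t \<ge> 0" "s \<ge> 0" "i \<noteq> k"
  shows "psi (\<theta> + t *\<^sub>R axis i 1 + s *\<^sub>R axis k 1) + psi \<theta> \<le> psi (\<theta> + t *\<^sub>R axis i 1) + psi (\<theta> + s *\<^sub>R axis k 1)"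
proof -
  have "psi (\<theta> + t *\<^sub>R axis i 1 + s *\<^sub>R axis k 1) + psi \<theta> = 
    (\<integral>e. Max (range (\<lambda>j. (\<theta> + t *\<^sub>R axis i 1 + s *\<^sub>R axis k 1) $ j + e $ j)) + Max (range (\<lambda>j. \<theta> $ j + e $ j)) \<partial>P)"
    unfolding psi_def using integ_Mx[of "\<theta> + t *\<^sub>R axis i 1 + s *\<^sub>R axis k 1"] integ_Mx[of \<theta>]
    by (subst Bochner_Integration.integral_add) auto
  also have "\<dots> \<le> (\<integral>e. Max (range (\<lambda>j. (\<theta> + t *\<^sub>R axis i 1) $ j + e $ j)) + Max (range (\<lambda>j. (\<theta> + s *\<^sub>R axis k 1) $ j + e $ j)) \<partial>P)"
  proof (intro integral_mono integ_Mx Bochner_Integration.integrable_add)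
    fix e :: "real^'n"
    define A where "A = Max (range (\<lambda>j. (\<theta> + t *\<^sub>R axis i 1) $ j + e $ j))"
    define B where "B = Max (range (\<lambda>j. (\<theta> + s *\<^sub>R axis k 1) $ j + e $ j))"
    define C where "C = Max (range (\<lambda>j. (\<theta> + t *\<^sub>R axis i 1 + s *\<^sub>R axis k 1) $ j + e $ j))"
    define D where "D = Max (range (\<lambda>j. \<theta> $ j + e $ j))"
    have "C \<le> max A B" unfolding C_def
    proof (subst Max_range_le_iff, intro allI)
      fix j
      show "(\<theta> + t *\<^sub>R axis i 1 + s *\<^sub>R axis k 1) $ j + e $ j \<le> max A B"
      proof (cases "j = i")
        case True
        then have "(\<theta> + t *\<^sub>R axis i 1 + s *\<^sub>R axis k 1) $ j + e $ j = (\<theta> + t *\<^sub>R axis i 1) $ j + e $ j"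
          using assms by (auto simp: axis_def)
        also have "\<dots> \<le> A" unfolding A_def by (rule Max_range_ge)
        finally show ?thesis by simp
      next
        case False
        then have "(\<theta> + t *\<^sub>R axis i 1 + s *\<^sub>R axis k 1) $ j + e $ j = (\<theta> + s *\<^sub>R axis k 1) $ j + e $ j"
          using assms by (auto simp: axis_def)
        also have "\<dots> \<le> B" unfolding B_def by (rule Max_range_ge)
        finally show ?thesis by simp
      qed
    qed
    moreover have "D \<le> min A B" unfolding D_def
    proof (subst Max_range_le_iff, intro allI)
      fix j
      have "\<theta> $ j + e $ j \<le> (\<theta> + t *\<^sub>R axis i 1) $ j + e $ j" using assms by (auto simp: axis_def)
      also have "\<dots> \<le> A" unfolding A_def by (rule Max_range_ge)
      finally have 1: "\<theta> $ j + e $ j \<le> A" .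
      have "\<theta> $ j + e $ j \<le> (\<theta> + s *\<^sub>R axis k 1) $ j + e $ j" using assms by (auto simp: axis_def)
      also have "\<dots> \<le> B" unfolding B_def by (rule Max_range_ge)
      finally show "\<theta> $ j + e $ j \<le> min A B" using 1 by simp
    qed
    ultimately show "C + D \<le> A + B" by linarith
  qed
  also have "\<dots> = psi (\<theta> + t *\<^sub>R axis i 1) + psi (\<theta> + s *\<^sub>R axis k 1)"
    unfolding psi_def using integ_Mx[of "\<theta> + t *\<^sub>R axis i 1"] integ_Mx[of "\<theta> + s *\<^sub>R axis k 1"]
    by (subst Bochner_Integration.integral_add) auto
  finally show ?thesis .
qed

end

lemma dir_lim:
  fixes f :: "'a::real_normed_vector \<Rightarrow> real"
  assumes "(f has_derivative D) (at x)"
  shows "((\<lambda>t. (f (x + t *\<^sub>R h) - f x) / t) \<longlongrightarrow> D h) (at_right 0)"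
proof -
  have d1: "((\<lambda>t. x + t *\<^sub>R h) has_derivative (\<lambda>t. t *\<^sub>R h)) (at (0::real))"
    by (auto intro!: derivative_eq_intros)
  have d2: "(f has_derivative D) (at ((\<lambda>t. x + t *\<^sub>R h) 0))" using assms by simp
  have lin: "bounded_linear D" using assms by (rule has_derivative_bounded_linear)
  have "((\<lambda>t. f (x + t *\<^sub>R h)) has_derivative (\<lambda>t. D (t *\<^sub>R h))) (at 0)"
    using has_derivative_compose[OF d1 d2] by (simp add: o_def)
  moreover have "(\<lambda>t. D (t *\<^sub>R h)) = (*) (D h)"
    using lin by (auto simp: linear_simps(5) mult.commute)
  ultimately have "((\<lambda>t. f (x + t *\<^sub>R h)) has_field_derivative D h) (at 0)"
    by (simp add: has_field_derivative_def)
  then have "((\<lambda>t. (f (x + t *\<^sub>R h) - f x) / t) \<longlongrightarrow> D h) (at 0)"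
    by (simp add: has_field_derivative_iff)
  then show ?thesis by (rule tendsto_mono[OF at_le[OF subset_UNIV]])
qed

lemma quad_bound:
  fixes h :: "'n::finite \<Rightarrow> 'n \<Rightarrow> real" and v :: "'n \<Rightarrow> real"
  assumes row: "\<And>i. (\<Sum>j\<in>UNIV. h i j) = 0"
    and off: "\<And>i j. i \<noteq> j \<Longrightarrow> h i j \<le> 0"
    and tr: "2 * (\<Sum>i\<in>UNIV. h i i) \<le> L"
    and vb: "\<And>i. \<bar>v i\<bar> \<le> m"
  shows "(\<Sum>i\<in>UNIV. v i * (\<Sum>j\<in>UNIV. v j * h i j)) \<le> L * m\<^sup>2"
proof -
  have m0: "m \<ge> 0" using vb[of undefined] by linarith
  have eq: "v i * (\<Sum>j\<in>UNIV. v j * h i j) = (\<Sum>j\<in>UNIV. h i j * (v i * (v j - v i)))" for i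
  proof -
    have "(\<Sum>j\<in>UNIV. h i j * (v i * (v j - v i))) = (\<Sum>j\<in>UNIV. v i * (v j * h i j)) - (\<Sum>j\<in>UNIV. h i j) * (v i * v i)"
      by (simp add: sum_subtractf sum_distrib_left sum_distrib_right algebra_simps)
    then show ?thesis using row[of i] by (simp add: sum_distrib_left)
  qed
  have tb: "h i j * (v i * (v j - v i)) \<le> (if j = i then 0 else - (2 * m\<^sup>2) * h i j)" for i j
  proof (cases "j = i")
    case False
    have "\<bar>v i * (v j - v i)\<bar> \<le> m * (2 * m)"
      unfolding abs_mult using vb[of i] vb[of j] m0
      by (intro mult_mono) (auto simp: abs_diff_le_iff)
    then have "v i * (v j - v i) \<ge> - (2 * m\<^sup>2)" by (simp add: power2_eq_square abs_le_iff)
    then have "h i j * (v i * (v j - v i)) \<le> h i j * (- (2 * m\<^sup>2))"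
      using off[of i j] False by (intro mult_left_mono_neg) auto
    then show ?thesis using False by (simp add: mult.commute)
  qed simp
  have rs: "(\<Sum>j\<in>UNIV. (if j = i then 0 else - (2 * m\<^sup>2) * h i j)) = 2 * m\<^sup>2 * h i i" for i
  proof -
    have "(\<Sum>j\<in>UNIV. (if j = i then 0 else - (2 * m\<^sup>2) * h i j)) = (\<Sum>j\<in>UNIV. - (2 * m\<^sup>2) * h i j) - (- (2 * m\<^sup>2) * h i i)"
      by (simp add: sum.If_cases Diff_eq[symmetric] sum_diff1)
    moreover have "(\<Sum>j\<in>UNIV. - (2 * m\<^sup>2) * h i j) = - (2 * m\<^sup>2) * (\<Sum>j\<in>UNIV. h i j)" by (simp add: sum_distrib_left)
    ultimately show ?thesis using row[of i] by simp
  qed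
  have "(\<Sum>i\<in>UNIV. v i * (\<Sum>j\<in>UNIV. v j * h i j)) \<le> (\<Sum>i\<in>UNIV. 2 * m\<^sup>2 * h i i)"
    unfolding eq rs[symmetric] by (intro sum_mono tb)
  also have "\<dots> = m\<^sup>2 * (2 * (\<Sum>i\<in>UNIV. h i i))" by (simp add: sum_distrib_left algebra_simps)
  also have "\<dots> \<le> m\<^sup>2 * L" using tr by (intro mult_left_mono) auto
  finally show ?thesis by (simp add: mult.commute)
qed

locale smooth = noise P for P :: "(real ^ 'n::finite) measure" +
  fixes G :: "real^'n \<Rightarrow> real^'n" and H :: "real^'n \<Rightarrow> real^'n \<Rightarrow> real^'n" and L :: real
  assumes derG: "\<And>\<theta>. (psi has_derivative (\<lambda>h. G \<theta> \<bullet> h)) (at \<theta>)"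
    and derH: "\<And>\<theta>. (G has_derivative H \<theta>) (at \<theta>)"
    and trace: "\<And>\<theta>. 2 * (\<Sum>i\<in>UNIV. H \<theta> (axis i 1) $ i) \<le> L"
begin

lemma ev_pos: "eventually (\<lambda>t. 0 < t \<and> t < 1) (at_right (0::real))"
  by (auto simp: eventually_at_right_field intro!: exI[of _ 1])

lemma G_lim: "((\<lambda>t. (psi (\<theta> + t *\<^sub>R axis i 1) - psi \<theta>) / t) \<longlongrightarrow> G \<theta> $ i) (at_right 0)"
  using dir_lim[OF derG[of \<theta>], of "axis i 1"] by (simp add: inner_axis)

lemma G_nonneg: "G \<theta> $ i \<ge> 0"
proof (rule tendsto_lowerbound[OF G_lim])
  show "\<forall>\<^sub>F t in at_right 0. 0 \<le> (psi (\<theta> + t *\<^sub>R axis i 1) - psi \<theta>) / t"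
    using ev_pos by eventually_elim (use psi_mono in auto)
qed simp

lemma G_sum: "(\<Sum>i\<in>UNIV. G \<theta> $ i) = 1"
proof -
  have l1: "((\<lambda>t. (psi (\<theta> + t *\<^sub>R one) - psi \<theta>) / t) \<longlongrightarrow> G \<theta> \<bullet> one) (at_right 0)"
    by (rule dir_lim[OF derG])
  have l2: "((\<lambda>t. (psi (\<theta> + t *\<^sub>R one) - psi \<theta>) / t) \<longlongrightarrow> 1) (at_right 0)"
    by (rule Lim_transform_eventually[OF tendsto_const]) (use ev_pos in eventually_elim, auto simp: psi_shift)
  have "G \<theta> \<bullet> one = 1" using tendsto_unique[OF _ l1 l2] by simp
  then show ?thesis by (simp add: inner_vec_def one_def)
qed

lemma G_simplex: "G \<theta> \<in> prob_simplex"
  unfolding prob_simplex_def using G_nonneg G_sum by auto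

lemma grad_ineq: "psi \<theta> + G \<theta> \<bullet> (\<theta>' - \<theta>) \<le> psi \<theta>'"
proof -
  have l1: "((\<lambda>t. (psi (\<theta> + t *\<^sub>R (\<theta>' - \<theta>)) - psi \<theta>) / t) \<longlongrightarrow> G \<theta> \<bullet> (\<theta>' - \<theta>)) (at_right 0)"
    by (rule dir_lim[OF derG])
  have "G \<theta> \<bullet> (\<theta>' - \<theta>) \<le> psi \<theta>' - psi \<theta>"
  proof (rule tendsto_upperbound[OF l1])
    show "\<forall>\<^sub>F t in at_right 0. (psi (\<theta> + t *\<^sub>R (\<theta>' - \<theta>)) - psi \<theta>) / t \<le> psi \<theta>' - psi \<theta>"
      using ev_pos
    proof eventually_elim
      case (elim t)
      have "\<theta> + t *\<^sub>R (\<theta>' - \<theta>) = (1 - t) *\<^sub>R \<theta> + t *\<^sub>R \<theta>'" by (simp add: algebra_simps)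
      then have "psi (\<theta> + t *\<^sub>R (\<theta>' - \<theta>)) \<le> (1 - t) * psi \<theta> + t * psi \<theta>'"
        using psi_convex[of t \<theta> \<theta>'] elim by simp
      then have "psi (\<theta> + t *\<^sub>R (\<theta>' - \<theta>)) - psi \<theta> \<le> t * (psi \<theta>' - psi \<theta>)" by (simp add: algebra_simps)
      then show ?case using elim by (simp add: divide_le_eq mult.commute)
    qed
  qed simp
  then show ?thesis by simp
qed

lemma G_shift: "G (\<theta> + c *\<^sub>R one) = G \<theta>"
proof -
  have d1: "((\<lambda>x. psi (x + c *\<^sub>R one)) has_derivative (\<lambda>h. G (\<theta> + c *\<^sub>R one) \<bullet> h)) (at \<theta>)"
  proof -
    have a: "((\<lambda>x. x + c *\<^sub>R one) has_derivative (\<lambda>h. h)) (at \<theta>)" by (auto intro!: derivative_eq_intros)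
    show ?thesis using has_derivative_compose[OF a derG[of "\<theta> + c *\<^sub>R one"]] by (simp add: o_def)
  qed
  have d2: "((\<lambda>x. psi (x + c *\<^sub>R one)) has_derivative (\<lambda>h. G \<theta> \<bullet> h)) (at \<theta>)"
    unfolding psi_shift by (auto intro!: derivative_eq_intros derG)
  have "(\<lambda>h. G (\<theta> + c *\<^sub>R one) \<bullet> h) = (\<lambda>h. G \<theta> \<bullet> h)" by (rule has_derivative_unique[OF d1 d2])
  then have "\<And>i. G (\<theta> + c *\<^sub>R one) \<bullet> axis i 1 = G \<theta> \<bullet> axis i 1" by metis
  then show ?thesis by (simp add: inner_axis vec_eq_iff)
qed

lemma Gi_der: "((\<lambda>x. G x $ i) has_derivative (\<lambda>h. H \<theta> h $ i)) (at \<theta>)"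
  by (rule bounded_linear.has_derivative[OF bounded_linear_vec_nth derH])

lemma H_lin: "bounded_linear (H \<theta>)"
  by (rule has_derivative_bounded_linear[OF derH])

lemma H_one: "H \<theta> one $ i = 0"
proof -
  have l1: "((\<lambda>t. (G (\<theta> + t *\<^sub>R one) $ i - G \<theta> $ i) / t) \<longlongrightarrow> H \<theta> one $ i) (at_right 0)"
    by (rule dir_lim[OF Gi_der])
  have l2: "((\<lambda>t. (G (\<theta> + t *\<^sub>R one) $ i - G \<theta> $ i) / t) \<longlongrightarrow> 0) (at_right 0)"
    by (simp add: G_shift)
  show ?thesis using tendsto_unique[OF _ l1 l2] by simp
qed

lemma one_sum: "one = (\<Sum>j\<in>UNIV. axis j 1)"
  by (simp add: vec_eq_iff one_def axis_def sum_component)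

lemma vec_sum: "(v::real^'n) = (\<Sum>j\<in>UNIV. v $ j *\<^sub>R axis j 1)"
proof -
  have "\<And>i. (\<Sum>x\<in>UNIV. v $ x * (if i = x then 1 else 0)) = v $ i"
    by (simp add: if_distrib[of "\<lambda>y. _ * y"] cong: if_cong)
  then show ?thesis by (simp add: vec_eq_iff axis_def sum_component)
qed

lemma H_row: "(\<Sum>j\<in>UNIV. H \<theta> (axis j 1) $ i) = 0"
proof -
  have "H \<theta> one = (\<Sum>j\<in>UNIV. H \<theta> (axis j 1))"
    unfolding one_sum using H_lin by (simp add: linear_sum bounded_linear.linear)
  then show ?thesis using H_one[of \<theta> i] by (simp add: sum_component)
qed

lemma G_decr:
  assumes "s \<ge> 0" "i \<noteq> k"
  shows "G (\<theta> + s *\<^sub>R axis k 1) $ i \<le> G \<theta> $ i"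
proof (rule tendsto_le[OF _ G_lim G_lim])
  show "\<forall>\<^sub>F t in at_right 0. (psi (\<theta> + s *\<^sub>R axis k 1 + t *\<^sub>R axis i 1) - psi (\<theta> + s *\<^sub>R axis k 1)) / t
        \<le> (psi (\<theta> + t *\<^sub>R axis i 1) - psi \<theta>) / t"
    using ev_pos
  proof eventually_elim
    case (elim t)
    have "psi (\<theta> + t *\<^sub>R axis i 1 + s *\<^sub>R axis k 1) + psi \<theta> \<le> psi (\<theta> + t *\<^sub>R axis i 1) + psi (\<theta> + s *\<^sub>R axis k 1)"
      using psi_submod[of t s i k \<theta>] elim assms by simp
    moreover have "\<theta> + t *\<^sub>R axis i 1 + s *\<^sub>R axis k 1 = \<theta> + s *\<^sub>R axis k 1 + t *\<^sub>R axis i 1" by (simp add: algebra_simps)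
    ultimately show ?case using elim by (intro divide_right_mono) auto
  qed
qed simp

lemma H_off:
  assumes "i \<noteq> k"
  shows "H \<theta> (axis k 1) $ i \<le> 0"
proof (rule tendsto_upperbound[OF dir_lim[OF Gi_der]])
  show "\<forall>\<^sub>F t in at_right 0. (G (\<theta> + t *\<^sub>R axis k 1) $ i - G \<theta> $ i) / t \<le> 0"
    using ev_pos by eventually_elim (use G_decr[OF _ assms] in \<open>auto intro: divide_nonpos_pos\<close>)
qed simp

lemma H_quad:
  assumes "\<And>i. \<bar>v $ i\<bar> \<le> m"
  shows "H w v \<bullet> v \<le> L * m\<^sup>2"
proof -
  have "H w v = (\<Sum>j\<in>UNIV. v $ j *\<^sub>R H w (axis j 1))"
    by (subst vec_sum[of v]) (simp add: linear_sum linear_cmul bounded_linear.linear[OF H_lin])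
  then have "H w v \<bullet> v = (\<Sum>i\<in>UNIV. v $ i * (\<Sum>j\<in>UNIV. v $ j * H w (axis j 1) $ i))"
    by (simp add: inner_vec_def sum_component mult.commute)
  also have "\<dots> \<le> L * m\<^sup>2"
    by (rule quad_bound[where h = "\<lambda>i j. H w (axis j 1) $ i"]) (auto simp: H_row H_off trace assms)
  finally show ?thesis .
qed

end

context smooth
begin

lemma line_der: "((\<lambda>s::real. \<xi> + s *\<^sub>R v) has_derivative (\<lambda>t. t *\<^sub>R v)) (at s)"
  by (auto intro!: derivative_eq_intros)

lemma taylor:
  assumes "\<And>i. \<bar>v $ i\<bar> \<le> m"
  shows "psi (\<xi> + v) \<le> psi \<xi> + G \<xi> \<bullet> v + L * m\<^sup>2 / 2"
proof -
  define f where "f s = psi (\<xi> + s *\<^sub>R v)" for s :: real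
  define f' where "f' s = G (\<xi> + s *\<^sub>R v) \<bullet> v" for s :: real
  define f'' where "f'' s = H (\<xi> + s *\<^sub>R v) v \<bullet> v" for s :: real
  define K where "K = L * m\<^sup>2"
  have Df: "(f has_real_derivative f' s) (at s)" for s
  proof -
    have "(f has_derivative (\<lambda>t. G (\<xi> + s *\<^sub>R v) \<bullet> (t *\<^sub>R v))) (at s)"
      using has_derivative_compose[OF line_der derG[of "\<xi> + s *\<^sub>R v"]] by (simp add: o_def f_def[abs_def])
    moreover have "(\<lambda>t. G (\<xi> + s *\<^sub>R v) \<bullet> (t *\<^sub>R v)) = (*) (f' s)"
      by (auto simp: f'_def mult.commute)
    ultimately show ?thesis by (simp add: has_field_derivative_def)
  qed
  have Df': "(f' has_real_derivative f'' s) (at s)" for s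
  proof -
    have "((\<lambda>s. G (\<xi> + s *\<^sub>R v)) has_derivative (\<lambda>t. H (\<xi> + s *\<^sub>R v) (t *\<^sub>R v))) (at s)"
      using has_derivative_compose[OF line_der derH[of "\<xi> + s *\<^sub>R v"]] by (simp add: o_def)
    then have "(f' has_derivative (\<lambda>t. H (\<xi> + s *\<^sub>R v) (t *\<^sub>R v) \<bullet> v)) (at s)"
      unfolding f'_def by (rule bounded_linear.has_derivative[OF bounded_linear_inner_left])
    moreover have "(\<lambda>t. H (\<xi> + s *\<^sub>R v) (t *\<^sub>R v) \<bullet> v) = (*) (f'' s)"
      using H_lin by (auto simp: f''_def mult.commute linear_simps(5))
    ultimately show ?thesis by (simp add: has_field_derivative_def)
  qed
  have f''b: "f'' s \<le> K" for s unfolding f''_def K_def by (rule H_quad[OF assms])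
  define g where "g s = f' s - f' 0 - s * K" for s
  have Dg: "(g has_real_derivative f'' s - K) (at s)" for s
    unfolding g_def[abs_def] by (auto intro!: derivative_eq_intros Df')
  have gle: "g s \<le> 0" if "s \<ge> 0" for s
  proof -
    have "g 0 \<ge> g s"
      by (rule DERIV_nonpos_imp_nonincreasing[OF that]) (metis Dg f''b diff_le_0_iff_le)
    then show ?thesis by (simp add: g_def)
  qed
  define k where "k s = f s - f 0 - s * f' 0 - s\<^sup>2 * K / 2" for s
  have Dk: "(k has_real_derivative g s) (at s)" for s
    unfolding k_def[abs_def] g_def by (auto intro!: derivative_eq_intros Df simp: power2_eq_square algebra_simps)
  have "k 0 \<ge> k 1"
    by (rule DERIV_nonpos_imp_nonincreasing[where f = k and a = 0 and b = 1]) (auto intro: Dk gle)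
  then show ?thesis by (simp add: k_def f_def f'_def K_def)
qed

end

context smooth
begin

lemma F_ge:
  assumes "\<eta> > 0" shows "\<theta> $ k \<le> phi P \<eta> \<theta>"
proof -
  have "\<theta> $ k / \<eta> \<le> psi ((1/\<eta>) *\<^sub>R \<theta>)" using psi_ge[of "(1/\<eta>) *\<^sub>R \<theta>" k] by simp
  then have "\<theta> $ k \<le> \<eta> * psi ((1/\<eta>) *\<^sub>R \<theta>)" using assms by (simp add: divide_le_eq mult.commute)
  then show ?thesis by (simp add: phi_scale[OF assms(1)])
qed

lemma F_grad_ineq:
  assumes "\<eta> > 0"
  shows "phi P \<eta> \<theta> + G ((1/\<eta>) *\<^sub>R \<theta>) \<bullet> (\<theta>' - \<theta>) \<le> phi P \<eta> \<theta>'"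
proof -
  have "psi ((1/\<eta>) *\<^sub>R \<theta>) + G ((1/\<eta>) *\<^sub>R \<theta>) \<bullet> ((1/\<eta>) *\<^sub>R \<theta>' - (1/\<eta>) *\<^sub>R \<theta>) \<le> psi ((1/\<eta>) *\<^sub>R \<theta>')"
    by (rule grad_ineq)
  then have "\<eta> * (psi ((1/\<eta>) *\<^sub>R \<theta>) + G ((1/\<eta>) *\<^sub>R \<theta>) \<bullet> ((1/\<eta>) *\<^sub>R \<theta>' - (1/\<eta>) *\<^sub>R \<theta>)) \<le> \<eta> * psi ((1/\<eta>) *\<^sub>R \<theta>')"
    using assms by simp
  moreover have "\<eta> * (G ((1/\<eta>) *\<^sub>R \<theta>) \<bullet> ((1/\<eta>) *\<^sub>R \<theta>' - (1/\<eta>) *\<^sub>R \<theta>)) = G ((1/\<eta>) *\<^sub>R \<theta>) \<bullet> (\<theta>' - \<theta>)"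
    using assms by (simp add: scaleR_diff_right[symmetric] del: scaleR_diff_right)
  ultimately show ?thesis using assms by (simp add: phi_scale[OF assms(1)] distrib_left)
qed

lemma F_der:
  assumes "\<eta> > 0"
  shows "(phi P \<eta> has_derivative (\<lambda>h. G ((1/\<eta>) *\<^sub>R \<theta>) \<bullet> h)) (at \<theta>)"
proof -
  have e: "phi P \<eta> = (\<lambda>\<theta>. \<eta> * psi ((1/\<eta>) *\<^sub>R \<theta>))" using assms by (auto simp: phi_scale[OF assms(1)])
  have a: "((\<lambda>\<theta>. (1/\<eta>) *\<^sub>R \<theta>) has_derivative (\<lambda>h. (1/\<eta>) *\<^sub>R h)) (at \<theta>)"
    by (auto intro!: derivative_eq_intros)
  have "((\<lambda>\<theta>. psi ((1/\<eta>) *\<^sub>R \<theta>)) has_derivative (\<lambda>h. G ((1/\<eta>) *\<^sub>R \<theta>) \<bullet> ((1/\<eta>) *\<^sub>R h))) (at \<theta>)"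
    using has_derivative_compose[OF a derG] by (simp add: o_def)
  then have "((\<lambda>\<theta>. \<eta> * psi ((1/\<eta>) *\<^sub>R \<theta>)) has_derivative (\<lambda>h. \<eta> * (G ((1/\<eta>) *\<^sub>R \<theta>) \<bullet> ((1/\<eta>) *\<^sub>R h)))) (at \<theta>)"
    by (rule has_derivative_mult_right)
  moreover have "(\<lambda>h. \<eta> * (G ((1/\<eta>) *\<^sub>R \<theta>) \<bullet> ((1/\<eta>) *\<^sub>R h))) = (\<lambda>h. G ((1/\<eta>) *\<^sub>R \<theta>) \<bullet> h)"
    using assms by auto
  ultimately show ?thesis unfolding e by simp
qed

lemma F_smooth:
  assumes "\<eta> > 0" "\<And>i. \<bar>u $ i\<bar> \<le> m"
  shows "phi P \<eta> (\<theta> + u) \<le> phi P \<eta> \<theta> + G ((1/\<eta>) *\<^sub>R \<theta>) \<bullet> u + L * m\<^sup>2 / (2 * \<eta>)"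
proof -
  have vb: "\<bar>((1/\<eta>) *\<^sub>R u) $ i\<bar> \<le> m / \<eta>" for i
    using assms(2)[of i] assms(1) by (simp add: divide_right_mono)
  have "psi ((1/\<eta>) *\<^sub>R \<theta> + (1/\<eta>) *\<^sub>R u) \<le> psi ((1/\<eta>) *\<^sub>R \<theta>) + G ((1/\<eta>) *\<^sub>R \<theta>) \<bullet> ((1/\<eta>) *\<^sub>R u) + L * (m / \<eta>)\<^sup>2 / 2"
    by (rule taylor[OF vb])
  then have "\<eta> * psi ((1/\<eta>) *\<^sub>R \<theta> + (1/\<eta>) *\<^sub>R u) \<le> \<eta> * (psi ((1/\<eta>) *\<^sub>R \<theta>) + G ((1/\<eta>) *\<^sub>R \<theta>) \<bullet> ((1/\<eta>) *\<^sub>R u) + L * (m / \<eta>)\<^sup>2 / 2)"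
    by (rule mult_left_mono) (use assms(1) in auto)
  moreover have "\<eta> * (psi ((1/\<eta>) *\<^sub>R \<theta>) + G ((1/\<eta>) *\<^sub>R \<theta>) \<bullet> ((1/\<eta>) *\<^sub>R u) + L * (m / \<eta>)\<^sup>2 / 2)
     = \<eta> * psi ((1/\<eta>) *\<^sub>R \<theta>) + G ((1/\<eta>) *\<^sub>R \<theta>) \<bullet> u + L * m\<^sup>2 / (2 * \<eta>)"
    using assms(1) by (simp add: field_simps power2_eq_square)
  ultimately show ?thesis unfolding phi_scale[OF assms(1)] scaleR_add_right by linarith
qed

end

lemma dot_le:
  assumes "y \<in> prob_simplex" "\<And>i. (\<theta>::real^'n::finite) $ i \<le> c"
  shows "\<theta> \<bullet> y \<le> c"
proof -
  have "\<theta> \<bullet> y = (\<Sum>i\<in>UNIV. \<theta> $ i * y $ i)" by (simp add: inner_vec_def)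
  also have "\<dots> \<le> (\<Sum>i\<in>UNIV. c * y $ i)"
    using assms unfolding prob_simplex_def by (intro sum_mono mult_right_mono) auto
  also have "\<dots> = c" using assms(1) unfolding prob_simplex_def by (simp add: sum_distrib_left[symmetric])
  finally show ?thesis .
qed

lemma simplex_ne: "axis i 1 \<in> (prob_simplex :: (real^'n::finite) set)"
  unfolding prob_simplex_def by (auto simp: axis_def)

lemma cumul_0: "cumul u 0 = 0" by (simp add: cumul_def)
lemma cumul_Suc: "cumul u (Suc k) = cumul u k + u (Suc k)" by (simp add: cumul_def)

context smooth
begin

lemma reg_ge:
  assumes "\<eta> > 0" "y \<in> prob_simplex"
  shows "\<theta>' \<bullet> y - phi P \<eta> \<theta>' \<le> reg P \<eta> y"
proof -
  have "bdd_above (range (\<lambda>\<theta>. \<theta> \<bullet> y - phi P \<eta> \<theta>))"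
    by (rule bdd_aboveI2[of _ _ 0]) (use dot_le[OF assms(2) F_ge[OF assms(1)]] in auto)
  then show ?thesis unfolding reg_def using cSUP_upper[of \<theta>' UNIV "\<lambda>\<theta>. \<theta> \<bullet> y - phi P \<eta> \<theta>"] by simp
qed

lemma ftrl_grad:
  assumes eta: "\<eta> > 0" and xs: "x \<in> prob_simplex"
    and opt: "\<forall>y\<in>prob_simplex. \<theta> \<bullet> y - reg P \<eta> y \<le> \<theta> \<bullet> x - reg P \<eta> x"
  shows "x = G ((1/\<eta>) *\<^sub>R \<theta>)"
proof -
  define g where "g = G ((1/\<eta>) *\<^sub>R \<theta>)"
  have gs: "g \<in> prob_simplex" unfolding g_def by (rule G_simplex)
  have "reg P \<eta> g \<le> \<theta> \<bullet> g - phi P \<eta> \<theta>"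
    unfolding reg_def
  proof (rule cSUP_least)
    fix \<theta>' :: "real^'n"
    have "phi P \<eta> \<theta> + g \<bullet> (\<theta>' - \<theta>) \<le> phi P \<eta> \<theta>'" unfolding g_def by (rule F_grad_ineq[OF eta])
    then show "\<theta>' \<bullet> g - phi P \<eta> \<theta>' \<le> \<theta> \<bullet> g - phi P \<eta> \<theta>"
      by (simp add: inner_diff_right inner_commute)
  qed simp
  then have "reg P \<eta> x \<le> \<theta> \<bullet> x - phi P \<eta> \<theta>" using opt gs by force
  then have sub: "phi P \<eta> \<theta> + x \<bullet> (\<theta>' - \<theta>) \<le> phi P \<eta> \<theta>'" for \<theta>'
    using reg_ge[OF eta xs, of \<theta>'] by (simp add: inner_diff_right inner_commute)
  have le: "x \<bullet> h \<le> g \<bullet> h" for h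
  proof -
  have lim: "((\<lambda>t. (phi P \<eta> (\<theta> + t *\<^sub>R h) - phi P \<eta> \<theta>) / t) \<longlongrightarrow> g \<bullet> h) (at_right 0)"
    using dir_lim[OF F_der[OF eta], of \<theta> h] by (simp add: g_def)
  show ?thesis
  proof (rule tendsto_lowerbound[OF lim])
    show "\<forall>\<^sub>F t in at_right 0. x \<bullet> h \<le> (phi P \<eta> (\<theta> + t *\<^sub>R h) - phi P \<eta> \<theta>) / t"
      using ev_pos
    proof eventually_elim
      case (elim t)
      have "t * (x \<bullet> h) \<le> phi P \<eta> (\<theta> + t *\<^sub>R h) - phi P \<eta> \<theta>" using sub[of "\<theta> + t *\<^sub>R h"] by simp
      then show ?case using elim by (simp add: le_divide_eq mult.commute)
    qed
  qed simp
  qed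
  have "x $ i = g $ i" for i
    using le[of "axis i 1"] le[of "- axis i 1"] by (simp add: inner_axis)
  then show ?thesis by (simp add: vec_eq_iff g_def)
qed

lemma regret_bound:
  assumes eta: "\<eta> > 0" and ft: "is_ftrl P \<eta> u T x"
    and ub: "\<forall>t\<in>{1..T}. \<forall>i. \<bar>u t $ i\<bar> \<le> m"
  shows "regret u T x \<le> \<eta> * psi 0 + L / (2 * \<eta>) * T * m\<^sup>2"
proof -
  define C where "C = L * m\<^sup>2 / (2 * \<eta>)"
  have ind: "k \<le> T \<Longrightarrow> phi P \<eta> (cumul u k) - phi P \<eta> 0 - k * C \<le> (\<Sum>t\<in>{1..k}. u t \<bullet> x t)" for k
  proof (induction k)
    case 0 then show ?case by (simp add: cumul_0)
  next
    case (Suc k)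
    then have kT: "k < T" by simp
    have xe: "x (Suc k) = G ((1/\<eta>) *\<^sub>R cumul u k)"
      using ft kT unfolding is_ftrl_def by (intro ftrl_grad[OF eta]) auto
    have "phi P \<eta> (cumul u k + u (Suc k)) \<le> phi P \<eta> (cumul u k) + G ((1/\<eta>) *\<^sub>R cumul u k) \<bullet> u (Suc k) + C"
      unfolding C_def using ub Suc.prems by (intro F_smooth[OF eta]) auto
    then show ?case using Suc.IH kT xe
      by (simp add: cumul_Suc inner_commute algebra_simps)
  qed
  have "(SUP y\<in>prob_simplex. cumul u T \<bullet> y) \<le> phi P \<eta> (cumul u T)"
  proof (rule cSUP_least)
    show "prob_simplex \<noteq> {}" using simplex_ne by blast
  next
    fix y :: "real^'n" assume "y \<in> prob_simplex"
    then show "cumul u T \<bullet> y \<le> phi P \<eta> (cumul u T)" by (rule dot_le) (rule F_ge[OF eta])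
  qed
  moreover have "phi P \<eta> 0 = \<eta> * psi 0" by (simp add: phi_scale[OF eta])
  ultimately show ?thesis using ind[of T] unfolding regret_def C_def by (simp add: field_simps)
qed

end

lemma alg:
  fixes a L T m :: real
  assumes a: "a > 0" and L: "L > 0" and T: "T > 0" and m: "m > 0"
  shows "sqrt (L * T * m\<^sup>2 / (2 * a)) * a + L / (2 * sqrt (L * T * m\<^sup>2 / (2 * a))) * T * m\<^sup>2 = m * sqrt (2 * a * L * T)"
proof -
  define s where "s = sqrt (2 * a * L * T)"
  have s0: "s > 0" unfolding s_def using a L T by simp
  have s2: "s\<^sup>2 = 2 * a * L * T" unfolding s_def using a L T by simp
  have "(m * s / (2 * a))\<^sup>2 = m\<^sup>2 * s\<^sup>2 / (2 * a)\<^sup>2"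
    by (simp add: power_mult_distrib power_divide)
  also have "\<dots> = L * T * m\<^sup>2 / (2 * a)"
    unfolding s2 using a by (simp add: field_simps power2_eq_square)
  finally have "(m * s / (2 * a))\<^sup>2 = L * T * m\<^sup>2 / (2 * a)" .
  then have e: "sqrt (L * T * m\<^sup>2 / (2 * a)) = m * s / (2 * a)"
    using a m s0 by (intro real_sqrt_unique) auto
  have "m * s / (2 * a) * a + L / (2 * (m * s / (2 * a))) * T * m\<^sup>2 = m * s / 2 + L * T * m * a / s"
    using a m s0 by (simp add: field_simps power2_eq_square)
  also have "L * T * m * a / s = m * s / 2"
    using s0 s2 by (simp add: field_simps power2_eq_square)
  finally show ?thesis unfolding e s_def[symmetric] by simp
qed

theorem corollary2:
  fixes P :: "(real ^ 'n::finite) measure"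
    and L umax :: real and T :: nat and u :: "nat \<Rightarrow> real ^ 'n"
  assumes N2: "CARD('n) \<ge> 2"
    and prob: "prob_space P" and sets_P: "sets P = sets borel"
    and integ: "\<forall>i. integrable P (\<lambda>e. e $ i)"
    and mean0: "\<forall>i. (\<integral>e. e $ i \<partial>P) = 0"
    and abscont: "absolutely_continuous lborel P"
    and fullsupp: "\<forall>U. open U \<longrightarrow> U \<noteq> {} \<longrightarrow> emeasure P U > 0"
    and L_pos: "L > 0"
    and C2: "\<exists>G H. (\<forall>\<theta>. (phi P 1 has_derivative (\<lambda>h. G \<theta> \<bullet> h)) (at \<theta>))
               \<and> (\<forall>\<theta>. (G has_derivative H \<theta>) (at \<theta>))
               \<and> (\<forall>i j. continuous_on UNIV (\<lambda>\<theta>. H \<theta> (axis j 1) $ i))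
               \<and> (\<forall>\<theta>. 2 * (\<Sum>i\<in>UNIV. H \<theta> (axis i 1) $ i) \<le> L)"
    and T1: "T \<ge> 1"
    and ubound: "\<forall>t\<in>{1..T}. \<forall>i. \<bar>u t $ i\<bar> \<le> umax"
  shows "(\<forall>\<eta>>0. \<forall>x. is_ftrl P \<eta> u T x \<longrightarrow>
            regret u T x \<le> \<eta> * phi P 1 0 + L / (2 * \<eta>) * T * umax\<^sup>2)
       \<and> (phi P 1 0 > 0 \<longrightarrow>
            (\<forall>x. is_ftrl P (sqrt (L * T * umax\<^sup>2 / (2 * phi P 1 0))) u T x \<longrightarrow>
               regret u T x \<le> umax * sqrt (2 * phi P 1 0 * L * T)))"
proof -
  obtain G H where derG: "\<And>\<theta>. (phi P 1 has_derivative (\<lambda>h. G \<theta> \<bullet> h)) (at \<theta>)"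
    and derH: "\<And>\<theta>. (G has_derivative H \<theta>) (at \<theta>)"
    and tr: "\<And>\<theta>. 2 * (\<Sum>i\<in>UNIV. H \<theta> (axis i 1) $ i) \<le> L"
  proof -
    from C2 obtain G H where GH: "(\<forall>\<theta>. (phi P 1 has_derivative (\<lambda>h. G \<theta> \<bullet> h)) (at \<theta>))
               \<and> (\<forall>\<theta>. (G has_derivative H \<theta>) (at \<theta>))
               \<and> (\<forall>i j. continuous_on UNIV (\<lambda>\<theta>. H \<theta> (axis j 1) $ i))
               \<and> (\<forall>\<theta>. 2 * (\<Sum>i\<in>UNIV. H \<theta> (axis i 1) $ i) \<le> L)" by (elim exE)
    show ?thesis
      apply (rule that[of G H])
      using GH by simp_all
  qed
  interpret smooth P G H L
    by (rule smooth.intro[OF noise.intro[OF prob sets_P integ mean0] smooth_axioms.intro[OF derG derH tr]])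
  have "1 \<in> {1..T}" using T1 by simp
  then have "\<bar>u 1 $ undefined\<bar> \<le> umax" using ubound by blast
  then have m0: "umax \<ge> 0" by linarith
  have part1: "\<forall>\<eta>>0. \<forall>x. is_ftrl P \<eta> u T x \<longrightarrow>
            regret u T x \<le> \<eta> * phi P 1 0 + L / (2 * \<eta>) * T * umax\<^sup>2"
  proof (intro allI impI)
    fix \<eta> :: real and x assume "\<eta> > 0" "is_ftrl P \<eta> u T x"
    then show "regret u T x \<le> \<eta> * phi P 1 0 + L / (2 * \<eta>) * T * umax\<^sup>2"
      by (rule regret_bound[OF _ _ ubound])
  qed
  have part2: "regret u T x \<le> umax * sqrt (2 * phi P 1 0 * L * T)"
    if a: "phi P 1 0 > 0" and ft: "is_ftrl P (sqrt (L * T * umax\<^sup>2 / (2 * phi P 1 0))) u T x" for x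
  proof (cases "umax = 0")
    case True
    have u0: "u t = 0" if "t \<in> {1..T}" for t
    proof -
      have "\<forall>i. \<bar>u t $ i\<bar> \<le> 0" using ubound that True by blast
      then show ?thesis by (simp add: vec_eq_iff)
    qed
    have c0: "cumul u T = 0" unfolding cumul_def using u0 by simp
    have s0: "(\<Sum>t\<in>{1..T}. u t \<bullet> x t) = 0" using u0 by simp
    have "(SUP y\<in>prob_simplex. (0::real^'n) \<bullet> y) = 0"
    proof -
      have "prob_simplex \<noteq> ({} :: (real^'n) set)" using simplex_ne by blast
      then show ?thesis by simp
    qed
    then have "regret u T x = 0" unfolding regret_def c0 s0 by simp
    then show ?thesis using True by simp
  next
    case False
    then have mp: "umax > 0" using m0 by simp
    have Tp: "real T > 0" using T1 by simp
    have ep: "sqrt (L * T * umax\<^sup>2 / (2 * phi P 1 0)) > 0"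
      using a L_pos Tp mp by simp
    have "regret u T x \<le> sqrt (L * T * umax\<^sup>2 / (2 * phi P 1 0)) * phi P 1 0
          + L / (2 * sqrt (L * T * umax\<^sup>2 / (2 * phi P 1 0))) * T * umax\<^sup>2"
      using regret_bound[OF ep ft ubound] .
    also have "\<dots> = umax * sqrt (2 * phi P 1 0 * L * T)"
      by (rule alg[OF a L_pos Tp mp])
    finally show ?thesis .
  qed
  show ?thesis using part1 part2 by blast
qed

end
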